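(* Let $\mathbf{O}\,\dot\cup\,\mathbf{S}$ be a finite set of categorical variables, $\hat{\mathbf{s}}$ a fixed value of $\mathbf{S}$, and $\mathcal{G}$ a DAG over $\mathbf{O}\cup\mathbf{S}$ in which no node of $\mathbf{S}$ has a child. Let $\mathbf{X}=\mathrm{an}_{\mathcal{G}}(\mathbf{S})$ (so $\mathbf{S}\subseteq\mathbf{X}$), $\mathbf{Y}=\mathbf{O}\setminus\mathbf{X}$, $\mathcal{G}_1=\mathcal{G}_{\mathbf{X}}$ (induced subgraph on $\mathbf{X}$), and $\mathcal{G}_2=\phi_{\mathbf{X}\setminus\mathbf{S}}(\mathcal{G}_{\mathbf{O}})$. Let $P$ be a distribution over $\mathbf{O}$ with $p(\mathbf{x}\setminus\mathbf{s})>0$ for every value $\mathbf{x}\setminus\mathbf{s}$ of $\mathbf{X}\setminus\mathbf{S}$, let $P_1$ be the marginal of $P$ over $\mathbf{X}\setminus\mathbf{S}$, and $P_2$ the conditional distribution of $\mathbf{Y}$ given $\mathbf{X}\setminus\mathbf{S}$ under $P$. Then $$P\in\mathbf{BN}(\mathcal{G})[^{\mathbf{S}=\hat{\mathbf{s}}}\iff P_1\in\mathbf{BN}(\mathcal{G}_1)[^{\mathbf{S}=\hat{\mathbf{s}}}\ \text{ and }\ P_2\in\mathbf{BN}(\mathcal{G}_2).$$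
   Context: $\mathrm{an}_{\mathcal{G}}(\mathbf{S})$ is the set of nodes that are equal to or have a directed path to some node of $\mathbf{S}$. A conditional DAG is a DAG over $\mathbf{X}'\,\dot\cup\,\mathbf{Y}'$ in which all nodes of $\mathbf{Y}'$ (fixed nodes) have no parents; nodes of $\mathbf{X}'$ are random nodes. Fixing: for a DAG $\mathcal{H}$ over $\mathbf{V}$ and $\mathbf{A}\subseteq\mathbf{V}$, $\phi_{\mathbf{A}}(\mathcal{H})$ is the conditional DAG with random nodes $\mathbf{V}\setminus\mathbf{A}$, fixed nodes $\mathbf{A}$, the edges of $\mathcal{H}$ between nodes of $\mathbf{V}\setminus\mathbf{A}$, and the edges of $\mathcal{H}$ from nodes of $\mathbf{A}$ into nodes of $\mathbf{V}\setminus\mathbf{A}$. For a (conditional) DAG $\mathcal{H}$ with random nodes $\mathbf{X}'$ and fixed nodes $\mathbf{Y}'$, $\mathbf{BN}(\mathcal{H})$ is the set of conditional distributions of $\mathbf{X}'$ given $\mathbf{Y}'$ such that each random node is conditionally independent of the random nodes that are neither its descendants nor parents, given its parents (equivalently $p(\mathbf{x}'\mid\mathbf{y}')=\prod_{X\in\mathbf{X}'}p(x\mid\mathrm{pa}_{\mathcal{H}}(X))$); for an ordinary DAG, $\mathbf{Y}'=\emptyset$. For a model $\mathbf{M}$ over $\mathbf{A}\cup\mathbf{S}$, $\mathbf{M}[^{\mathbf{S}=\hat{\mathbf{s}}}$ is the set of distributions $Q$ over $\mathbf{A}$ such that there is $P\in\mathbf{M}$ with $p(\hat{\mathbf{s}})>0$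 and $q(\mathbf{a})=p(\mathbf{a}\mid\hat{\mathbf{s}})$. *)

theory Defs
  imports Complex_Main "HOL-Library.FuncSet"
begin

text \<open>Categorical variables: nodes of type 'v, each node v has a finite nonempty
 domain D v of values of type 'a. An assignment (value) of a set A of variables is an
 element of PiE A D (extensional functions, undefined outside A).
 A (conditional) distribution is a real-valued function on assignments.\<close>

definition asg :: "('v \<Rightarrow> 'a set) \<Rightarrow> 'v set \<Rightarrow> ('v \<Rightarrow> 'a) set" where
  "asg D A = PiE A D"

definition join :: "'v set \<Rightarrow> ('v \<Rightarrow> 'a) \<Rightarrow> ('v \<Rightarrow> 'a) \<Rightarrow> ('v \<Rightarrow> 'a)" where
  "join A x y = (\<lambda>v. if v \<in> A then x v else y v)"

definition is_dist :: "('v \<Rightarrow> 'a set) \<Rightarrow> 'v set \<Rightarrow> (('v \<Rightarrow> 'a) \<Rightarrow> real) \<Rightarrow> bool" where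
  "is_dist D A p \<longleftrightarrow> (\<forall>x\<in>asg D A. 0 \<le> p x) \<and> (\<Sum>x\<in>asg D A. p x) = 1"

definition is_cond_dist ::
  "('v \<Rightarrow> 'a set) \<Rightarrow> 'v set \<Rightarrow> 'v set \<Rightarrow> (('v \<Rightarrow> 'a) \<Rightarrow> real) \<Rightarrow> bool" where
  "is_cond_dist D R F q \<longleftrightarrow> (\<forall>y\<in>asg D F. is_dist D R (\<lambda>x. q (join R x y)))"

definition marg ::
  "('v \<Rightarrow> 'a set) \<Rightarrow> 'v set \<Rightarrow> 'v set \<Rightarrow> (('v \<Rightarrow> 'a) \<Rightarrow> real) \<Rightarrow> ('v \<Rightarrow> 'a) \<Rightarrow> real" where
  "marg D A B p x = (\<Sum>y\<in>{y\<in>asg D A. restrict y B = x}. p y)"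

definition pa :: "('v \<times> 'v) set \<Rightarrow> 'v \<Rightarrow> 'v set" where
  "pa E v = {u. (u, v) \<in> E}"

definition an :: "'v set \<Rightarrow> ('v \<times> 'v) set \<Rightarrow> 'v set \<Rightarrow> 'v set" where
  "an V E S = {v\<in>V. \<exists>s\<in>S. (v, s) \<in> E\<^sup>*}"

text \<open>BN(H) for a conditional DAG H with random nodes R, fixed nodes F and edges E:
 conditional distributions of R given F factorizing as a product over random nodes of
 conditional distributions of the node given its parents.\<close>
definition BN ::
  "('v \<Rightarrow> 'a set) \<Rightarrow> 'v set \<Rightarrow> 'v set \<Rightarrow> ('v \<times> 'v) set \<Rightarrow> (('v \<Rightarrow> 'a) \<Rightarrow> real) set" where
  "BN D R F E = {q. is_cond_dist D R F q \<and>
     (\<exists>k :: 'v \<Rightarrow> ('v \<Rightarrow> 'a) \<Rightarrow> 'a \<Rightarrow> real.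
        (\<forall>v\<in>R. \<forall>u\<in>asg D (pa E v). (\<forall>a\<in>D v. 0 \<le> k v u a) \<and> (\<Sum>a\<in>D v. k v u a) = 1) \<and>
        (\<forall>z\<in>asg D (R \<union> F). q z = (\<Prod>v\<in>R. k v (restrict z (pa E v)) (z v))))}"

text \<open>M[^{S = s}: for a model M over A \<union> S, the distributions q over A such that some
 p \<in> M has p(s) > 0 and q(a) = p(a | s).\<close>
definition cond_model ::
  "('v \<Rightarrow> 'a set) \<Rightarrow> 'v set \<Rightarrow> 'v set \<Rightarrow> (('v \<Rightarrow> 'a) \<Rightarrow> real) set \<Rightarrow> ('v \<Rightarrow> 'a)
    \<Rightarrow> (('v \<Rightarrow> 'a) \<Rightarrow> real) set" where
  "cond_model D A S M s = {q. \<exists>p\<in>M. 0 < marg D (A \<union> S) S p s \<and>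
      (\<forall>a\<in>asg D A. q a = p (join A a s) / marg D (A \<union> S) S p s)}"

end

theory Submission imports Defs begin

lemma asg_join:
  assumes "x \<in> asg D A" "y \<in> asg D B" shows "join A x y \<in> asg D (A \<union> B)"
  using assms unfolding asg_def join_def by (auto simp: PiE_iff extensional_def)

lemma asg_restrict:
  assumes "z \<in> asg D B" "A \<subseteq> B" shows "restrict z A \<in> asg D A"
  using assms unfolding asg_def by (auto simp: PiE_iff)

lemma asg_undef: "x \<in> asg D A \<Longrightarrow> v \<notin> A \<Longrightarrow> x v = undefined"
  unfolding asg_def by (auto simp: PiE_iff extensional_def)

lemma restrict_join1: "x \<in> asg D A \<Longrightarrow> restrict (join A x y) A = x"
  by (rule ext) (auto simp: join_def dest: asg_undef)

lemma restrict_join2: "y \<in> asg D B \<Longrightarrow> A \<inter> B = {} \<Longrightarrow> restrict (join A x y) B = y"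
  by (rule ext) (auto simp: join_def dest: asg_undef)

lemma join_restrict: "z \<in> asg D (A \<union> B) \<Longrightarrow> join A (restrict z A) (restrict z B) = z"
  by (rule ext) (auto simp: join_def dest: asg_undef)

lemma join_restrict2: "z \<in> asg D (A \<union> B) \<Longrightarrow> restrict z B = s \<Longrightarrow> join A (restrict z A) s = z"
  by (rule ext) (auto simp: join_def dest: asg_undef)

lemma sum_asg_split:
  assumes "A \<inter> B = {}"
  shows "(\<Sum>z\<in>asg D (A \<union> B). f z) = (\<Sum>x\<in>asg D A. \<Sum>y\<in>asg D B. f (join A x y))"
proof -
  have "(\<Sum>x\<in>asg D A. \<Sum>y\<in>asg D B. f (join A x y)) = (\<Sum>(x,y)\<in>asg D A \<times> asg D B. f (join A x y))"
    by (rule sum.cartesian_product)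
  also have "\<dots> = (\<Sum>z\<in>asg D (A \<union> B). f z)"
  proof (rule sum.reindex_bij_witness[where i="\<lambda>z. (restrict z A, restrict z B)" and j="\<lambda>(x,y). join A x y"])
    fix a assume a: "a \<in> asg D A \<times> asg D B"
    then obtain x y where a': "a = (x, y)" "x \<in> asg D A" "y \<in> asg D B" by blast
    then show "(restrict (case a of (x, y) \<Rightarrow> join A x y) A, restrict (case a of (x, y) \<Rightarrow> join A x y) B) = a"
      using assms by (simp add: restrict_join1 restrict_join2)
    show "(case a of (x, y) \<Rightarrow> join A x y) \<in> asg D (A \<union> B)" using a' asg_join by simp
  next
    fix b assume b: "b \<in> asg D (A \<union> B)"
    then show "(case (restrict b A, restrict b B) of (x, y) \<Rightarrow> join A x y) = b"
      by (simp add: join_restrict)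
    show "(restrict b A, restrict b B) \<in> asg D A \<times> asg D B" using b asg_restrict by blast
  qed (simp add: split_beta)
  finally show ?thesis by simp
qed

lemma marg_join:
  assumes "A \<inter> B = {}" "s \<in> asg D B"
  shows "marg D (A \<union> B) B f s = (\<Sum>x\<in>asg D A. f (join A x s))"
  unfolding marg_def
proof (rule sum.reindex_bij_witness[where i="\<lambda>x. join A x s" and j="\<lambda>z. restrict z A"])
  fix a assume a: "a \<in> {y \<in> asg D (A \<union> B). restrict y B = s}"
  then show "join A (restrict a A) s = a" using join_restrict2 by blast
  show "restrict a A \<in> asg D A" using a asg_restrict by blast
next
  fix b assume b: "b \<in> asg D A"
  then show "restrict (join A b s) A = b" by (rule restrict_join1)
  show "join A b s \<in> {y \<in> asg D (A \<union> B). restrict y B = s}"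
    using asg_join[OF b assms(2)] restrict_join2[OF assms(2,1)] by blast
next
  fix a assume a: "a \<in> {y \<in> asg D (A \<union> B). restrict y B = s}"
  then have "join A (restrict a A) s = a" using join_restrict2 by blast
  then show "f (join A (restrict a A) s) = f a" by simp
qed

lemma sink_exists:
  assumes "finite A" "acyclic E" "A \<noteq> {}"
  shows "\<exists>x\<in>A. \<forall>v\<in>A. (x, v) \<notin> E"
proof -
  let ?r = "E \<inter> (A \<times> A)"
  have "finite ?r" using assms(1) by auto
  moreover have "acyclic ?r" using assms(2) acyclic_subset by blast
  ultimately have "wf (?r\<inverse>)" by (rule finite_acyclic_wf_converse)
  then obtain z where "z \<in> A" "\<forall>y. (y, z) \<in> ?r\<inverse> \<longrightarrow> y \<notin> A"
    using assms(3) unfolding wf_eq_minimal by blast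
  then have "\<forall>v\<in>A. (z, v) \<notin> E" by blast
  then show ?thesis using \<open>z \<in> A\<close> by blast
qed

lemma sum_asg_single:
  "(\<Sum>w\<in>asg D {x}. g (w x)) = (\<Sum>a\<in>D x. g a)"
proof (rule sum.reindex_bij_witness[where i="\<lambda>a. restrict (\<lambda>_. a) {x}" and j="\<lambda>w. w x"])
  fix w assume "w \<in> asg D {x}"
  then show "restrict (\<lambda>_. w x) {x} = w" by (intro ext) (auto dest: asg_undef)
qed (auto simp: asg_def)

lemma key_sum:
  fixes k :: "'v \<Rightarrow> ('v \<Rightarrow> 'a) \<Rightarrow> 'a \<Rightarrow> real"
  assumes finR: "finite R" and ac: "acyclic E"
    and paR: "\<forall>v\<in>R. pa E v \<subseteq> R \<union> F"
    and zF: "\<forall>w\<in>F. z w \<in> D w"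
    and ker: "\<forall>v\<in>R. \<forall>u\<in>asg D (pa E v). (\<Sum>a\<in>D v. k v u a) = 1"
  shows "(\<Sum>y\<in>asg D R. \<Prod>v\<in>R. k v (restrict (join R y z) (pa E v)) (y v)) = 1"
  using finR paR ker
proof (induction R rule: finite_remove_induct)
  case empty
  then show ?case by (simp add: asg_def)
next
  case (remove A)
  obtain x where xA: "x \<in> A" and sink: "\<forall>v\<in>A. (x, v) \<notin> E"
    using sink_exists[OF remove(1) ac remove(2)] by blast
  define A' where "A' = A - {x}"
  have A_eq: "A = A' \<union> {x}" and dis: "A' \<inter> {x} = {}" using xA by (auto simp: A'_def)
  have xpa: "\<forall>v\<in>A. x \<notin> pa E v" using sink by (auto simp: pa_def)
  have paA': "\<forall>v\<in>A'. pa E v \<subseteq> A' \<union> F" using remove(5) xpa by (auto simp: A'_def)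
  have kerA': "\<forall>v\<in>A'. \<forall>u\<in>asg D (pa E v). (\<Sum>a\<in>D v. k v u a) = 1" using remove(6) by (auto simp: A'_def)
  have IH: "(\<Sum>y\<in>asg D A'. \<Prod>v\<in>A'. k v (restrict (join A' y z) (pa E v)) (y v)) = 1"
    using remove(4)[OF xA] paA' kerA' unfolding A'_def by blast
  have finA': "finite A'" using remove(1) by (simp add: A'_def)
  have "(\<Sum>y\<in>asg D A. \<Prod>v\<in>A. k v (restrict (join A y z) (pa E v)) (y v))
      = (\<Sum>y'\<in>asg D A'. \<Sum>w\<in>asg D {x}. \<Prod>v\<in>A. k v (restrict (join A (join A' y' w) z) (pa E v)) (join A' y' w v))"
    unfolding A_eq by (rule sum_asg_split[OF dis])
  also have "\<dots> = (\<Sum>y'\<in>asg D A'. \<Sum>w\<in>asg D {x}. k x (restrict (join A' y' z) (pa E x)) (w x) *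
        (\<Prod>v\<in>A'. k v (restrict (join A' y' z) (pa E v)) (y' v)))"
  proof (intro sum.cong refl)
    fix y' w assume y': "y' \<in> asg D A'" and w: "w \<in> asg D {x}"
    have r1: "\<And>v. v \<in> A \<Longrightarrow> restrict (join A (join A' y' w) z) (pa E v) = restrict (join A' y' z) (pa E v)"
      using xpa by (intro restrict_ext) (auto simp: join_def A'_def)
    have "(\<Prod>v\<in>A. k v (restrict (join A (join A' y' w) z) (pa E v)) (join A' y' w v))
        = k x (restrict (join A (join A' y' w) z) (pa E x)) (join A' y' w x) *
          (\<Prod>v\<in>A'. k v (restrict (join A (join A' y' w) z) (pa E v)) (join A' y' w v))"
      unfolding A_eq using finA' dis by (simp add: prod.union_disjoint)
    also have "\<dots> = k x (restrict (join A' y' z) (pa E x)) (w x) *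
        (\<Prod>v\<in>A'. k v (restrict (join A' y' z) (pa E v)) (y' v))"
      using r1 xA dis by (auto simp: join_def A'_def intro!: prod.cong)
    finally show "(\<Prod>v\<in>A. k v (restrict (join A (join A' y' w) z) (pa E v)) (join A' y' w v))
        = k x (restrict (join A' y' z) (pa E x)) (w x) *
          (\<Prod>v\<in>A'. k v (restrict (join A' y' z) (pa E v)) (y' v))" .
  qed
  also have "\<dots> = (\<Sum>y'\<in>asg D A'. (\<Prod>v\<in>A'. k v (restrict (join A' y' z) (pa E v)) (y' v)))"
  proof (intro sum.cong refl)
    fix y' assume y': "y' \<in> asg D A'"
    have u: "restrict (join A' y' z) (pa E x) \<in> asg D (pa E x)"
      using y' zF remove(5) xA xpa unfolding asg_def join_def
      by (auto simp: PiE_iff A'_def)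
    have "(\<Sum>w\<in>asg D {x}. k x (restrict (join A' y' z) (pa E x)) (w x) *
        (\<Prod>v\<in>A'. k v (restrict (join A' y' z) (pa E v)) (y' v)))
      = (\<Sum>a\<in>D x. k x (restrict (join A' y' z) (pa E x)) a) *
        (\<Prod>v\<in>A'. k v (restrict (join A' y' z) (pa E v)) (y' v))"
      using sum_asg_single[where g="\<lambda>a. k x (restrict (join A' y' z) (pa E x)) a *
        (\<Prod>v\<in>A'. k v (restrict (join A' y' z) (pa E v)) (y' v))" and D=D and x=x]
      by (simp add: sum_distrib_right)
    also have "\<dots> = (\<Prod>v\<in>A'. k v (restrict (join A' y' z) (pa E v)) (y' v))"
      using remove(6) xA u by simp
    finally show "(\<Sum>w\<in>asg D {x}. k x (restrict (join A' y' z) (pa E x)) (w x) *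
        (\<Prod>v\<in>A'. k v (restrict (join A' y' z) (pa E v)) (y' v)))
      = (\<Prod>v\<in>A'. k v (restrict (join A' y' z) (pa E v)) (y' v))" .
  qed
  also have "\<dots> = 1" by (rule IH)
  finally show ?case .
qed


definition pk :: "('v \<times> 'v) set \<Rightarrow> 'v set \<Rightarrow> ('v \<Rightarrow> ('v \<Rightarrow> 'a) \<Rightarrow> 'a \<Rightarrow> real) \<Rightarrow> ('v \<Rightarrow> 'a) \<Rightarrow> real" where
  "pk E R k z = (\<Prod>v\<in>R. k v (restrict z (pa E v)) (z v))"

definition kern_ok :: "('v \<Rightarrow> 'a set) \<Rightarrow> 'v set \<Rightarrow> ('v \<times> 'v) set \<Rightarrow> ('v \<Rightarrow> ('v \<Rightarrow> 'a) \<Rightarrow> 'a \<Rightarrow> real) \<Rightarrow> bool" where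
  "kern_ok D R E k \<longleftrightarrow> (\<forall>v\<in>R. \<forall>u\<in>asg D (pa E v). (\<forall>a\<in>D v. 0 \<le> k v u a) \<and> (\<Sum>a\<in>D v. k v u a) = 1)"

lemma pk_sum1:
  assumes "finite R" "acyclic E" "\<forall>v\<in>R. pa E v \<subseteq> R \<union> F" "\<forall>w\<in>F. z w \<in> D w" "kern_ok D R E k"
  shows "(\<Sum>y\<in>asg D R. pk E R k (join R y z)) = 1"
proof -
  have "(\<Sum>y\<in>asg D R. pk E R k (join R y z)) =
        (\<Sum>y\<in>asg D R. \<Prod>v\<in>R. k v (restrict (join R y z) (pa E v)) (y v))"
    unfolding pk_def by (intro sum.cong prod.cong refl) (simp add: join_def)
  also have "\<dots> = 1"
    using assms by (intro key_sum[where F=F]) (auto simp: kern_ok_def)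
  finally show ?thesis .
qed

lemma pk_nonneg:
  assumes "kern_ok D R E k" "z \<in> asg D Q" "\<forall>v\<in>R. insert v (pa E v) \<subseteq> Q"
  shows "0 \<le> pk E R k z"
  unfolding pk_def
proof (rule prod_nonneg)
  fix v assume v: "v \<in> R"
  have "restrict z (pa E v) \<in> asg D (pa E v)" using assms(2,3) v by (intro asg_restrict) auto
  moreover have "z v \<in> D v" using assms(2,3) v unfolding asg_def by (auto simp: PiE_iff)
  ultimately show "0 \<le> k v (restrict z (pa E v)) (z v)" using assms(1) v unfolding kern_ok_def by blast
qed

lemma pk_BN:
  assumes "finite R" "acyclic E" "\<forall>v\<in>R. pa E v \<subseteq> R \<union> F" "kern_ok D R E k"
    "\<forall>z\<in>asg D (R \<union> F). q z = pk E R k z"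
  shows "q \<in> BN D R F E"
proof -
  have "is_cond_dist D R F q"
    unfolding is_cond_dist_def is_dist_def
  proof (rule ballI)
    fix y assume y: "y \<in> asg D F"
    have yF: "\<forall>w\<in>F. y w \<in> D w" using y unfolding asg_def by (auto simp: PiE_iff)
    have A: "\<forall>x\<in>asg D R. 0 \<le> q (join R x y)"
    proof
      fix x assume x: "x \<in> asg D R"
      have j: "join R x y \<in> asg D (R \<union> F)" using asg_join[OF x y] .
      then show "0 \<le> q (join R x y)" using assms(5) pk_nonneg[OF assms(4) j] assms(3) by auto
    qed
    have "(\<Sum>x\<in>asg D R. q (join R x y)) = (\<Sum>x\<in>asg D R. pk E R k (join R x y))"
      using assms(5) asg_join[OF _ y] by (intro sum.cong) auto
    also have "\<dots> = 1" using pk_sum1[OF assms(1,2,3) yF assms(4)] .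
    finally show "(\<forall>x\<in>asg D R. 0 \<le> q (join R x y)) \<and> (\<Sum>x\<in>asg D R. q (join R x y)) = 1" using A by blast
  qed
  then show ?thesis using assms(4,5) unfolding BN_def kern_ok_def pk_def by blast
qed

lemma BN_pk:
  assumes "q \<in> BN D R F E"
  shows "\<exists>k. kern_ok D R E k \<and> (\<forall>z\<in>asg D (R \<union> F). q z = pk E R k z)"
  using assms unfolding BN_def kern_ok_def pk_def by blast

lemma pk_cong:
  assumes "\<And>v w. v \<in> R \<Longrightarrow> w \<in> insert v (pa E v) \<Longrightarrow> z w = z' w"
  shows "pk E R k z = pk E R k z'"
  unfolding pk_def using assms by (intro prod.cong refl arg_cong2[where f="k _"] restrict_ext) auto

lemma pk_cong_k:
  assumes "\<And>v. v \<in> R \<Longrightarrow> k v = k' v"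
  shows "pk E R k z = pk E R k' z"
  unfolding pk_def using assms by (intro prod.cong) auto

lemma pk_cong_E:
  assumes "\<And>v. v \<in> R \<Longrightarrow> pa E v = pa E' v"
  shows "pk E R k z = pk E' R k z"
  unfolding pk_def using assms by (intro prod.cong) auto

lemma pk_split:
  assumes "finite A" "finite B" "A \<inter> B = {}"
  shows "pk E (A \<union> B) k z = pk E A k z * pk E B k z"
  unfolding pk_def using assms by (simp add: prod.union_disjoint)

lemma kern_ok_subset: "kern_ok D R E k \<Longrightarrow> R' \<subseteq> R \<Longrightarrow> kern_ok D R' E k"
  unfolding kern_ok_def by blast


theorem theorem1:
  fixes D :: "'v \<Rightarrow> 'a set"
    and Ob S :: "'v set"
    and E :: "('v \<times> 'v) set"
    and s_hat :: "'v \<Rightarrow> 'a"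
    and P :: "('v \<Rightarrow> 'a) \<Rightarrow> real"
  assumes fin: "finite (Ob \<union> S)"
    and disj: "Ob \<inter> S = {}"
    and dom_fin: "\<forall>v\<in>Ob \<union> S. finite (D v) \<and> D v \<noteq> {}"
    and s_hat: "s_hat \<in> asg D S"
    and edges: "E \<subseteq> (Ob \<union> S) \<times> (Ob \<union> S)"
    and dag: "acyclic E"
    and S_childless: "\<forall>(u, w)\<in>E. u \<notin> S"
    and P_dist: "is_dist D Ob P"
    and P_pos: "\<forall>x\<in>asg D (an (Ob \<union> S) E S - S). 0 < marg D Ob (an (Ob \<union> S) E S - S) P x"
  shows "(let X = an (Ob \<union> S) E S;
              Y = Ob - X;
              P1 = marg D Ob (X - S) P;
              P2 = (\<lambda>z. P z / marg D Ob (X - S) P (restrict z (X - S)))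
          in P \<in> cond_model D Ob S (BN D (Ob \<union> S) {} E) s_hat
             \<longleftrightarrow> P1 \<in> cond_model D (X - S) S (BN D X {} (E \<inter> (X \<times> X))) s_hat
               \<and> P2 \<in> BN D Y (X - S) (E \<inter> ((Y \<union> (X - S)) \<times> Y)))"
proof -
  define X where "X = an (Ob \<union> S) E S"
  define Y where "Y = Ob - X"
  define Xs where "Xs = X - S"
  define E1 where "E1 = E \<inter> (X \<times> X)"
  define E2 where "E2 = E \<inter> ((Y \<union> Xs) \<times> Y)"
  define P1 where "P1 = marg D Ob Xs P"
  define P2 where "P2 = (\<lambda>z. P z / P1 (restrict z Xs))"
  have SX: "S \<subseteq> X" unfolding X_def an_def by auto
  have XV: "X \<subseteq> Ob \<union> S" unfolding X_def an_def by auto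
  have finOb: "finite Ob" using fin by auto
  have finX: "finite X" using fin XV finite_subset by blast
  have finY: "finite Y" using finOb Y_def by auto
  have finXs: "finite Xs" using finX Xs_def by auto
  have finV: "finite (Ob \<union> S)" by (rule fin)
  have Ob_eq: "Ob = Y \<union> Xs" using XV disj unfolding Y_def Xs_def by auto
  have YXs: "Y \<inter> Xs = {}" unfolding Y_def Xs_def by auto
  have V_eq: "Ob \<union> S = X \<union> Y" using XV SX unfolding Y_def by auto
  have XY: "X \<inter> Y = {}" unfolding Y_def by auto
  have X_eq: "X = Xs \<union> S" using SX unfolding Xs_def by auto
  have XsS: "Xs \<inter> S = {}" unfolding Xs_def by auto
  have XsOb: "Xs \<subseteq> Ob" using Ob_eq by auto
  have paX: "\<forall>v\<in>X. pa E v \<subseteq> X"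
  proof (intro ballI subsetI)
    fix v u assume v: "v \<in> X" and u: "u \<in> pa E v"
    then have uv: "(u, v) \<in> E" by (simp add: pa_def)
    then have uV: "u \<in> Ob \<union> S" using edges by auto
    from v obtain s where s: "s \<in> S" "(v, s) \<in> E\<^sup>*" unfolding X_def an_def by auto
    then have "(u, s) \<in> E\<^sup>*" using uv by (meson converse_rtrancl_into_rtrancl)
    then show "u \<in> X" using uV s unfolding X_def an_def by auto
  qed
  have paY: "\<forall>v\<in>Y. pa E v \<subseteq> Ob"
    using edges S_childless unfolding pa_def by auto
  have paV: "\<forall>v\<in>Ob \<union> S. pa E v \<subseteq> (Ob \<union> S) \<union> {}"
    using edges unfolding pa_def by auto
  have pa1: "\<And>v. v \<in> X \<Longrightarrow> pa E v = pa E1 v"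
    using paX unfolding E1_def pa_def by auto
  have pa2: "\<And>v. v \<in> Y \<Longrightarrow> pa E v = pa E2 v"
    using paY Ob_eq unfolding E2_def pa_def by auto
  have ac1: "acyclic E1" using dag acyclic_subset unfolding E1_def by blast
  have ac2: "acyclic E2" using dag acyclic_subset unfolding E2_def by blast
  have P1pos: "\<forall>x\<in>asg D Xs. 0 < P1 x"
    using P_pos unfolding P1_def Xs_def X_def by blast
  have P1sum: "\<And>x. x \<in> asg D Xs \<Longrightarrow> P1 x = (\<Sum>y\<in>asg D Y. P (join Y y x))"
    unfolding P1_def using marg_join[OF YXs] Ob_eq by metis
  have joinYOb: "\<And>y x. y \<in> asg D Y \<Longrightarrow> x \<in> asg D Xs \<Longrightarrow> join Y y x \<in> asg D Ob"
    using asg_join Ob_eq by metis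
  have Psum: "(\<Sum>z\<in>asg D Ob. P z) = 1" using P_dist unfolding is_dist_def by blast
  have sumP1: "(\<Sum>x\<in>asg D Xs. P1 x) = 1"
  proof -
    have "(\<Sum>x\<in>asg D Xs. P1 x) = (\<Sum>x\<in>asg D Xs. \<Sum>y\<in>asg D Y. P (join Y y x))"
      using P1sum by (rule sum.cong[OF refl])
    also have "\<dots> = (\<Sum>y\<in>asg D Y. \<Sum>x\<in>asg D Xs. P (join Y y x))" by (rule sum.swap)
    also have "\<dots> = (\<Sum>z\<in>asg D (Y \<union> Xs). P z)" by (rule sum_asg_split[OF YXs, symmetric])
    also have "\<dots> = 1" using Psum Ob_eq by simp
    finally show ?thesis .
  qed
  have shat_ok: "\<forall>w\<in>S. s_hat w \<in> D w" using s_hat unfolding asg_def by (auto simp: PiE_iff)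
  have restr_Xs: "\<And>z. z \<in> asg D Ob \<Longrightarrow> restrict z Xs \<in> asg D Xs"
    using asg_restrict XsOb by blast
  have joinV: "\<And>z. z \<in> asg D Ob \<Longrightarrow> join Ob z s_hat \<in> asg D (Ob \<union> S \<union> {})"
    using asg_join s_hat by simp
  have joinX: "\<And>x. x \<in> asg D Xs \<Longrightarrow> join Xs x s_hat \<in> asg D (X \<union> {})"
    using asg_join s_hat X_eq by simp
  have Fp: "\<And>k z. z \<in> asg D Ob \<Longrightarrow> pk E (Ob \<union> S) k (join Ob z s_hat)
            = pk E X k (join Xs (restrict z Xs) s_hat) * pk E Y k z"
  proof -
    fix k z assume z: "z \<in> asg D Ob"
    have "pk E (Ob \<union> S) k (join Ob z s_hat) = pk E X k (join Ob z s_hat) * pk E Y k (join Ob z s_hat)"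
      unfolding V_eq using finX finY XY by (rule pk_split)
    also have "pk E X k (join Ob z s_hat) = pk E X k (join Xs (restrict z Xs) s_hat)"
    proof (rule pk_cong)
      fix v w assume "v \<in> X" "w \<in> insert v (pa E v)"
      then have "w \<in> X" using paX by auto
      then show "join Ob z s_hat w = join Xs (restrict z Xs) s_hat w"
        using X_eq XsOb disj unfolding join_def by auto
    qed
    also have "pk E Y k (join Ob z s_hat) = pk E Y k z"
    proof (rule pk_cong)
      fix v w assume "v \<in> Y" "w \<in> insert v (pa E v)"
      then have "w \<in> Ob" using paY Y_def by auto
      then show "join Ob z s_hat w = z w" unfolding join_def by auto
    qed
    finally show "pk E (Ob \<union> S) k (join Ob z s_hat)
            = pk E X k (join Xs (restrict z Xs) s_hat) * pk E Y k z" .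
  qed
  have main: "P \<in> cond_model D Ob S (BN D (Ob \<union> S) {} E) s_hat
             \<longleftrightarrow> P1 \<in> cond_model D Xs S (BN D X {} E1) s_hat \<and> P2 \<in> BN D Y Xs E2"
  proof
    assume "P \<in> cond_model D Ob S (BN D (Ob \<union> S) {} E) s_hat"
    then obtain p where pBN: "p \<in> BN D (Ob \<union> S) {} E"
      and mpos: "0 < marg D (Ob \<union> S) S p s_hat"
      and Pp: "\<forall>a\<in>asg D Ob. P a = p (join Ob a s_hat) / marg D (Ob \<union> S) S p s_hat"
      unfolding cond_model_def by blast
    define m where "m = marg D (Ob \<union> S) S p s_hat"
    obtain k where kok: "kern_ok D (Ob \<union> S) E k"
      and pk_p: "\<forall>z\<in>asg D (Ob \<union> S \<union> {}). p z = pk E (Ob \<union> S) k z"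
      using BN_pk[OF pBN] by blast
    have kX: "kern_ok D X E k" using kern_ok_subset[OF kok XV] .
    have kY: "kern_ok D Y E k" using kern_ok_subset[OF kok] V_eq by blast
    have Pz: "\<And>z. z \<in> asg D Ob \<Longrightarrow> P z = pk E X k (join Xs (restrict z Xs) s_hat) * pk E Y k z / m"
      using Pp pk_p joinV Fp unfolding m_def by simp
    have sumY: "\<And>x. x \<in> asg D Xs \<Longrightarrow> (\<Sum>y\<in>asg D Y. pk E Y k (join Y y x)) = 1"
    proof -
      fix x assume x: "x \<in> asg D Xs"
      have "\<forall>w\<in>Xs. x w \<in> D w" using x unfolding asg_def by (auto simp: PiE_iff)
      moreover have "\<forall>v\<in>Y. pa E v \<subseteq> Y \<union> Xs" using paY Ob_eq by auto
      ultimately show "(\<Sum>y\<in>asg D Y. pk E Y k (join Y y x)) = 1"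
        using pk_sum1[OF finY dag _ _ kY] by blast
    qed
    have P1x: "\<And>x. x \<in> asg D Xs \<Longrightarrow> P1 x = pk E X k (join Xs x s_hat) / m"
    proof -
      fix x assume x: "x \<in> asg D Xs"
      have "P1 x = (\<Sum>y\<in>asg D Y. P (join Y y x))" using P1sum[OF x] .
      also have "\<dots> = (\<Sum>y\<in>asg D Y. pk E X k (join Xs x s_hat) / m * pk E Y k (join Y y x))"
      proof (rule sum.cong[OF refl])
        fix y assume y: "y \<in> asg D Y"
        have "restrict (join Y y x) Xs = x" using restrict_join2[OF x YXs] .
        then show "P (join Y y x) = pk E X k (join Xs x s_hat) / m * pk E Y k (join Y y x)"
          using Pz[OF joinYOb[OF y x]] by simp
      qed
      also have "\<dots> = pk E X k (join Xs x s_hat) / m * (\<Sum>y\<in>asg D Y. pk E Y k (join Y y x))"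
        by (rule sum_distrib_left[symmetric])
      also have "\<dots> = pk E X k (join Xs x s_hat) / m"
        using sumY[OF x] by simp
      finally show "P1 x = pk E X k (join Xs x s_hat) / m" .
    qed
    have mne: "m \<noteq> 0" using mpos m_def by simp
    have msum: "(\<Sum>x\<in>asg D Xs. pk E X k (join Xs x s_hat)) = m"
    proof -
      have "(\<Sum>x\<in>asg D Xs. pk E X k (join Xs x s_hat)) = (\<Sum>x\<in>asg D Xs. P1 x) * m"
        using P1x mne by (simp add: sum_distrib_right)
      then show ?thesis using sumP1 by simp
    qed
    define p1 where "p1 = pk E1 X k"
    have kX1: "kern_ok D X E1 k" using kX pa1 unfolding kern_ok_def by simp
    have p1BN: "p1 \<in> BN D X {} E1"
      using pk_BN[OF finX ac1 _ kX1] paX pa1 unfolding p1_def by auto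
    have p1eq: "\<And>x. p1 x = pk E X k x" unfolding p1_def using pk_cong_E pa1 by metis
    have m1: "marg D (Xs \<union> S) S p1 s_hat = m"
      using marg_join[OF XsS s_hat, of p1] msum p1eq by simp
    have "P1 \<in> cond_model D Xs S (BN D X {} E1) s_hat"
      unfolding cond_model_def
    proof (intro CollectI bexI[of _ p1] conjI ballI)
      show "0 < marg D (Xs \<union> S) S p1 s_hat" using m1 mpos m_def by simp
      fix a assume "a \<in> asg D Xs"
      then show "P1 a = p1 (join Xs a s_hat) / marg D (Xs \<union> S) S p1 s_hat"
        using m1 P1x p1eq by simp
    qed (rule p1BN)
    moreover have "P2 \<in> BN D Y Xs E2"
    proof (rule pk_BN[OF finY ac2 _ _, where k=k])
      show "\<forall>v\<in>Y. pa E2 v \<subseteq> Y \<union> Xs" using paY pa2 Ob_eq by auto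
      show "kern_ok D Y E2 k" using kY pa2 unfolding kern_ok_def by simp
      show "\<forall>z\<in>asg D (Y \<union> Xs). P2 z = pk E2 Y k z"
      proof
        fix z assume "z \<in> asg D (Y \<union> Xs)"
        then have z: "z \<in> asg D Ob" using Ob_eq by simp
        have r: "restrict z Xs \<in> asg D Xs" using restr_Xs[OF z] .
        have a: "0 < pk E X k (join Xs (restrict z Xs) s_hat) / m" using P1pos r P1x[OF r] by metis
        then have a': "pk E X k (join Xs (restrict z Xs) s_hat) \<noteq> 0" by auto
        have "P2 z = (pk E X k (join Xs (restrict z Xs) s_hat) * pk E Y k z / m)
                 / (pk E X k (join Xs (restrict z Xs) s_hat) / m)"
          unfolding P2_def using Pz[OF z] P1x[OF r] by simp
        also have "\<dots> = pk E Y k z" using a' mne by (simp add: field_simps)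
        also have "\<dots> = pk E2 Y k z" using pk_cong_E pa2 by metis
        finally show "P2 z = pk E2 Y k z" .
      qed
    qed
    ultimately show "P1 \<in> cond_model D Xs S (BN D X {} E1) s_hat \<and> P2 \<in> BN D Y Xs E2" by blast
  next
    assume "P1 \<in> cond_model D Xs S (BN D X {} E1) s_hat \<and> P2 \<in> BN D Y Xs E2"
    then have H1: "P1 \<in> cond_model D Xs S (BN D X {} E1) s_hat" and H2: "P2 \<in> BN D Y Xs E2" by auto
    from H1 obtain p1 where p1BN: "p1 \<in> BN D X {} E1"
      and m1pos: "0 < marg D (Xs \<union> S) S p1 s_hat"
      and P1p: "\<forall>a\<in>asg D Xs. P1 a = p1 (join Xs a s_hat) / marg D (Xs \<union> S) S p1 s_hat"
      unfolding cond_model_def by blast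
    define m1 where "m1 = marg D (Xs \<union> S) S p1 s_hat"
    obtain k1 where k1ok: "kern_ok D X E1 k1"
      and p1pk: "\<forall>z\<in>asg D (X \<union> {}). p1 z = pk E1 X k1 z"
      using BN_pk[OF p1BN] by blast
    obtain k2 where k2ok: "kern_ok D Y E2 k2"
      and P2pk: "\<forall>z\<in>asg D (Y \<union> Xs). P2 z = pk E2 Y k2 z"
      using BN_pk[OF H2] by blast
    define k where "k = (\<lambda>v. if v \<in> X then k1 v else k2 v)"
    have kok: "kern_ok D (Ob \<union> S) E k"
      unfolding kern_ok_def
    proof
      fix v assume v: "v \<in> Ob \<union> S"
      show "\<forall>u\<in>asg D (pa E v). (\<forall>a\<in>D v. 0 \<le> k v u a) \<and> (\<Sum>a\<in>D v. k v u a) = 1"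
      proof (cases "v \<in> X")
        case True
        then show ?thesis using k1ok pa1[OF True] unfolding kern_ok_def k_def by simp
      next
        case False
        then have "v \<in> Y" using v V_eq by auto
        then show ?thesis using k2ok pa2[of v] False unfolding kern_ok_def k_def by simp
      qed
    qed
    define p where "p = pk E (Ob \<union> S) k"
    have pBN: "p \<in> BN D (Ob \<union> S) {} E"
      using pk_BN[OF finV dag paV kok] unfolding p_def by simp
    have m1ne: "m1 \<noteq> 0" using m1pos m1_def by simp
    have key: "\<And>z. z \<in> asg D Ob \<Longrightarrow> p (join Ob z s_hat) = m1 * P z"
    proof -
      fix z assume z: "z \<in> asg D Ob"
      have r: "restrict z Xs \<in> asg D Xs" using restr_Xs[OF z] .
      have zz: "z \<in> asg D (Y \<union> Xs)" using z Ob_eq by simp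
      have pos: "0 < P1 (restrict z Xs)" using P1pos r by blast
      have "p (join Ob z s_hat) = pk E X k (join Xs (restrict z Xs) s_hat) * pk E Y k z"
        unfolding p_def using Fp[OF z] .
      also have "pk E X k (join Xs (restrict z Xs) s_hat) = pk E X k1 (join Xs (restrict z Xs) s_hat)"
        by (rule pk_cong_k) (simp add: k_def)
      also have "\<dots> = pk E1 X k1 (join Xs (restrict z Xs) s_hat)"
        by (rule pk_cong_E) (rule pa1)
      also have "\<dots> = p1 (join Xs (restrict z Xs) s_hat)" using p1pk joinX[OF r] by simp
      also have "\<dots> = m1 * P1 (restrict z Xs)" using P1p r m1ne unfolding m1_def by simp
      also have "pk E Y k z = pk E Y k2 z"
        by (rule pk_cong_k) (use XY in \<open>auto simp: k_def\<close>)
      also have "\<dots> = pk E2 Y k2 z"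
        by (rule pk_cong_E) (rule pa2)
      also have "\<dots> = P2 z" using P2pk zz by simp
      also have "\<dots> = P z / P1 (restrict z Xs)" unfolding P2_def ..
      finally have eq: "p (join Ob z s_hat) = m1 * P1 (restrict z Xs) * (P z / P1 (restrict z Xs))" .
      have aux: "\<And>c x. 0 < (c::real) \<Longrightarrow> m1 * c * (x / c) = m1 * x" by simp
      show "p (join Ob z s_hat) = m1 * P z" by (simp only: eq aux[OF pos])
    qed
    have mm: "marg D (Ob \<union> S) S p s_hat = m1"
    proof -
      have "marg D (Ob \<union> S) S p s_hat = (\<Sum>z\<in>asg D Ob. p (join Ob z s_hat))"
        using marg_join[OF disj s_hat] .
      also have "\<dots> = (\<Sum>z\<in>asg D Ob. m1 * P z)" using key by (rule sum.cong[OF refl])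
      also have "\<dots> = m1" using Psum by (simp add: sum_distrib_left[symmetric])
      finally show ?thesis .
    qed
    show "P \<in> cond_model D Ob S (BN D (Ob \<union> S) {} E) s_hat"
      unfolding cond_model_def
    proof (intro CollectI bexI[of _ p] conjI ballI)
      show "0 < marg D (Ob \<union> S) S p s_hat" using mm m1pos m1_def by simp
      fix a assume "a \<in> asg D Ob"
      then show "P a = p (join Ob a s_hat) / marg D (Ob \<union> S) S p s_hat"
        using mm key m1ne by simp
    qed (rule pBN)
  qed
  show ?thesis
    using main unfolding Let_def X_def[symmetric] Y_def[symmetric]
    by (simp add: Xs_def E1_def E2_def P1_def P2_def)
qed

end
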